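(* Let $k\ge 2$ be an integer that is not a perfect square. If either (R1) $k$ is prime, or (R2) $k=\alpha^{n}$ with $\alpha$ prime and $n$ odd, then $R_k=\{0,\,k-1\}$ (so $\upsilon=2$), i.e. every solution $(t,\xi)$ of $T_\xi=kT_t$ satisfies $\xi\equiv 0$ or $\xi\equiv k-1 \pmod k$, and both remainders occur.
   Context: For an integer $m\ge 0$, $T_m=m(m+1)/2$ denotes the $m$-th triangular number. For a non-square integer $k\ge 2$, consider the equation $T_\xi=k\,T_t$ in nonnegative integers $t,\xi$. Let $R_k=\{\xi \bmod k : \exists\, t\ge 0 \text{ with } T_\xi=kT_t\}$, the set of least nonnegative remainders modulo $k$ of all $\xi$ occurring in solutions $(t,\xi)$, and $\upsilon=|R_k|$. *)

theory Defs
  imports "HOL-Computational_Algebra.Primes"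
begin

definition tri :: "nat \<Rightarrow> nat" where
  "tri m = m * (m + 1) div 2"

definition R_set :: "nat \<Rightarrow> nat set" where
  "R_set k = {\<xi> mod k | \<xi> t. tri \<xi> = k * tri t}"

end

theory Submission imports Defs "HOL-Analysis.Kronecker_Approximation_Theorem"
begin

lemma sqrt_nonsq_irrat:
  fixes D :: nat
  assumes "\<not> (\<exists>m. D = m ^ 2)"
  shows "sqrt (real D) \<notin> \<rat>"
proof
  assume "sqrt (real D) \<in> \<rat>"
  then obtain m n :: nat where n: "n \<noteq> 0" and e: "\<bar>sqrt (real D)\<bar> = real m / real n" and c: "coprime m n"
    by (rule Rats_abs_nat_div_natE)
  have "sqrt (real D) * real n = real m" using e n by simp
  hence "real D * (real n)^2 = (real m)^2"
    by (metis of_nat_0_le_iff power_mult_distrib real_sqrt_pow2)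
  hence eq: "D * n^2 = m^2" by (metis of_nat_eq_iff of_nat_mult of_nat_power)
  hence "n^2 dvd m^2" by (metis dvd_triv_right)
  moreover have "coprime (n^2) (m^2)" using c by (simp add: coprime_commute)
  ultimately have "n^2 dvd 1"
    using coprime_common_divisor[of "n^2" "m^2" "n^2"] by simp
  hence "n^2 = 1" by simp
  hence "n = 1" by simp
  with eq show False using assms by auto
qed

lemma nonsq_int:
  fixes D :: nat and h k :: int
  assumes "\<not> (\<exists>m. D = m ^ 2)" "k \<noteq> 0"
  shows "h^2 \<noteq> int D * k^2"
proof
  assume e: "h^2 = int D * k^2"
  hence "(real_of_int h)^2 = real D * (real_of_int k)^2"
    by (metis of_int_mult of_int_of_nat_eq of_int_power)
  hence "sqrt ((real_of_int h)^2) = sqrt (real D) * sqrt ((real_of_int k)^2)"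
    by (simp add: real_sqrt_mult)
  hence "\<bar>real_of_int h\<bar> = sqrt (real D) * \<bar>real_of_int k\<bar>" by simp
  hence "sqrt (real D) = \<bar>real_of_int h\<bar> / \<bar>real_of_int k\<bar>" using assms(2) by (simp add: field_simps)
  hence "sqrt (real D) \<in> \<rat>" by (metis Rats_abs_iff Rats_divide Rats_of_int)
  thus False using sqrt_nonsq_irrat[OF assms(1)] by simp
qed

lemma approx_bound:
  fixes D :: nat and h k :: int
  assumes "k > 0" "\<bar>sqrt (real D) - real_of_int h / real_of_int k\<bar> < 1 / (real_of_int k)^2"
  shows "\<bar>h^2 - int D * k^2\<bar> \<le> 2 * int D + 1"
proof -
  define s where "s = sqrt (real D)"
  have s0: "s \<ge> 0" by (simp add: s_def)
  have sD: "s \<le> real D"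
  proof (cases "D = 0")
    case False then have "1 \<le> real D" by simp
    then have s1: "sqrt (real D) \<ge> 1" by simp
    have "sqrt (real D) * 1 \<le> sqrt (real D) * sqrt (real D)"
      by (rule mult_left_mono) (use s1 in auto)
    then have "sqrt (real D) \<le> real D" by simp
    then show ?thesis by (simp add: s_def)
  qed (simp add: s_def)
  define K where "K = real_of_int k"
  define H where "H = real_of_int h"
  have K0: "K > 0" using assms(1) by (simp add: K_def)
  have "\<bar>s - H / K\<bar> < 1 / K^2"
    using assms(2) by (simp add: s_def H_def K_def)
  hence "\<bar>s - H / K\<bar> * K < 1 / K^2 * K"
    using K0 by (rule mult_strict_right_mono)
  moreover have "\<bar>s - H / K\<bar> * K = \<bar>K * s - H\<bar>"
  proof -
    have "(s - H / K) * K = K * s - H" using K0 by (simp add: field_simps)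
    moreover have "\<bar>s - H / K\<bar> * K = \<bar>(s - H / K) * K\<bar>" using K0 by (simp add: abs_mult)
    ultimately show ?thesis by simp
  qed
  moreover have "1 / K^2 * K = 1 / K" using K0 by (simp add: power2_eq_square)
  ultimately have a: "\<bar>H - K * s\<bar> < 1 / K" by (simp add: abs_minus_commute)
  have K1: "K \<ge> 1" using assms(1) by (simp add: K_def)
  hence iK: "1 / K \<le> 1" by simp
  have b: "\<bar>H + K * s\<bar> \<le> 1 / K + 2 * K * s"
  proof -
    have ks: "K * s \<ge> 0" using s0 K0 by simp
    have "\<bar>H + K * s\<bar> \<le> \<bar>H - K * s\<bar> + 2 * K * s" using ks by linarith
    thus ?thesis using a by linarith
  qed
  have "\<bar>H^2 - real D * K^2\<bar> = \<bar>H - K * s\<bar> * \<bar>H + K * s\<bar>"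
  proof -
    have ss: "s * s = real D" by (simp add: s_def)
    have "H^2 - real D * K^2 = (H - K * s) * (H + K * s)"
      by (simp add: power2_eq_square algebra_simps ss[symmetric])
    thus ?thesis by (simp add: abs_mult)
  qed
  also have "\<dots> \<le> (1 / K) * (1 / K + 2 * K * s)"
    by (rule mult_mono) (use a b K0 in auto)
  also have "\<dots> = 1 / K^2 + 2 * s" using K0 by (simp add: field_simps power2_eq_square)
  also have "\<dots> \<le> 1 + 2 * real D"
  proof -
    have "1 / K^2 \<le> 1" using K1 by simp
    thus ?thesis using sD by simp
  qed
  finally have "\<bar>H^2 - real D * K^2\<bar> \<le> 1 + 2 * real D" .
  hence "real_of_int \<bar>h^2 - int D * k^2\<bar> \<le> real_of_int (2 * int D + 1)"
    by (simp add: H_def K_def)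
  thus ?thesis by linarith
qed

lemma mod_abs_le:
  fixes a q :: int
  assumes "q \<noteq> 0"
  shows "\<bar>a mod q\<bar> \<le> \<bar>q\<bar>"
proof (cases "q > 0")
  case True thus ?thesis using pos_mod_sign[of q a] pos_mod_bound[of q a] by linarith
next
  case False
  show ?thesis
  proof (cases "q = 0")
    case True thus ?thesis using assms by simp
  next
    case F: False
    with False have "q < 0" by simp
    thus ?thesis using neg_mod_sign[of q a] neg_mod_bound[of q a] by linarith
  qed
qed

lemma pell_int:
  fixes D :: nat
  assumes nsq: "\<not> (\<exists>m. D = m ^ 2)"
  shows "\<exists>U V :: int. V \<noteq> 0 \<and> U^2 - int D * V^2 = 1"
proof -
  define A where "A = approx_set (sqrt (real D))"
  have infA: "infinite A"
    using rational_iff_finite_approx_set sqrt_nonsq_irrat[OF nsq] by (simp add: A_def)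
  define B where "B = 2 * int D + 1"
  define q where "q = (\<lambda>p::int\<times>int. fst p ^ 2 - int D * snd p ^ 2)"
  define f where "f = (\<lambda>p::int\<times>int. (q p, fst p mod q p, snd p mod q p))"
  have Aprop: "snd p > 0 \<and> \<bar>q p\<bar> \<le> B \<and> q p \<noteq> 0" if "p \<in> A" for p
  proof -
    obtain h k where p: "p = (h, k)" by (cases p)
    from that have "k > 0" "\<bar>sqrt (real D) - real_of_int h / real_of_int k\<bar> < 1 / (real_of_int k)^2"
      by (auto simp: A_def approx_set_def p)
    from approx_bound[OF this] show ?thesis using \<open>k > 0\<close> nonsq_int[OF nsq, of k h] by (simp add: p q_def B_def)
  qed
  have "f ` A \<subseteq> {-B..B} \<times> {-B..B} \<times> {-B..B}"
  proof
    fix y assume "y \<in> f ` A"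
    then obtain p where p: "p \<in> A" "y = f p" by auto
    have qn: "q p \<noteq> 0" using Aprop[OF p(1)] by simp
    have "\<bar>q p\<bar> \<le> B" using Aprop[OF p(1)] by simp
    moreover have "\<bar>fst p mod q p\<bar> \<le> B" using mod_abs_le[OF qn, of "fst p"] calculation by linarith
    moreover have "\<bar>snd p mod q p\<bar> \<le> B" using mod_abs_le[OF qn, of "snd p"] calculation by linarith
    ultimately show "y \<in> {-B..B} \<times> {-B..B} \<times> {-B..B}" using p(2) by (auto simp: f_def)
  qed
  hence finf: "finite (f ` A)" by (rule finite_subset) auto
  obtain p0 where p0: "p0 \<in> A" and inf0: "infinite {p \<in> A. f p = f p0}"
    using pigeonhole_infinite[OF infA finf] by blast
  have "{p \<in> A. f p = f p0} - {p0} \<noteq> {}"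
    using inf0 by (metis finite.emptyI finite_insert insert_Diff_single infinite_remove)
  then obtain p1 where p1: "p1 \<in> A" "f p1 = f p0" "p1 \<noteq> p0" by auto
  obtain h1 k1 where e0: "p0 = (h1, k1)" by (cases p0)
  obtain h2 k2 where e1: "p1 = (h2, k2)" by (cases p1)
  define Q where "Q = h1^2 - int D * k1^2"
  have k1: "k1 > 0" using Aprop[OF p0] e0 by simp
  have k2: "k2 > 0" using Aprop[OF p1(1)] e1 by simp
  have Q0: "Q \<noteq> 0" using nonsq_int[OF nsq, of k1 h1] k1 by (simp add: Q_def)
  from p1(2) have c: "h2^2 - int D * k2^2 = Q \<and> h2 mod (h2^2 - int D * k2^2) = h1 mod Q \<and> k2 mod (h2^2 - int D * k2^2) = k1 mod Q"
    unfolding f_def q_def e0 e1 Q_def fst_conv snd_conv prod.inject by (elim conjE) (intro conjI; assumption)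
  hence Q2: "h2^2 - int D * k2^2 = Q" by simp
  from c have m1: "h2 mod Q = h1 mod Q" and m2: "k2 mod Q = k1 mod Q" unfolding Q2 by simp_all
  from m1 obtain s where s: "h2 = h1 + Q * s" by (metis mod_eq_dvd_iff dvd_def add_diff_cancel_left' diff_add_cancel)
  from m2 obtain r where r: "k2 = k1 + Q * r" by (metis mod_eq_dvd_iff dvd_def add_diff_cancel_left' diff_add_cancel)
  define U where "U = 1 + h1 * s - int D * k1 * r"
  define V where "V = h1 * r - k1 * s"
  have key: "2 * (h1 * s - int D * k1 * r) + Q * (s^2 - int D * r^2) = 0"
  proof -
    have "Q * (2 * (h1 * s - int D * k1 * r) + Q * (s^2 - int D * r^2)) = 0"
      using Q2 unfolding s r Q_def by (simp add: algebra_simps power2_eq_square)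
    thus ?thesis using Q0 by simp
  qed
  have "U^2 - int D * V^2 = 1 + (2 * (h1 * s - int D * k1 * r) + Q * (s^2 - int D * r^2))"
    unfolding U_def V_def Q_def by (simp add: algebra_simps power2_eq_square)
  hence pellU: "U^2 - int D * V^2 = 1" using key by simp
  have "V \<noteq> 0"
  proof
    assume "V = 0"
    hence v0: "h1 * k2 = h2 * k1" unfolding V_def s r by (simp add: algebra_simps)
    have "Q * k2^2 = Q * k1^2"
    proof -
      have "Q * k2^2 = h1^2 * k2^2 - int D * k1^2 * k2^2" by (simp add: Q_def algebra_simps)
      also have "\<dots> = (h1 * k2)^2 - int D * k1^2 * k2^2" by (simp add: power_mult_distrib)
      also have "\<dots> = (h2 * k1)^2 - int D * k1^2 * k2^2" using v0 by simp
      also have "\<dots> = (h2^2 - int D * k2^2) * k1^2" by (simp add: power_mult_distrib algebra_simps)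
      also have "\<dots> = Q * k1^2" using Q2 by simp
      finally show ?thesis .
    qed
    hence "k2^2 = k1^2" using Q0 by simp
    hence "k2 = k1" using k1 k2 by (simp add: power2_eq_iff_nonneg)
    hence "h1 = h2" using v0 k1 by simp
    thus False using p1(3) e0 e1 \<open>k2 = k1\<close> by simp
  qed
  thus ?thesis using pellU by blast
qed

lemma tri2: "2 * tri m = m * (m + 1)"
  unfolding tri_def by simp

lemma tri_eq_iff: "tri x = k * tri t \<longleftrightarrow> x * (x + 1) = k * (t * (t + 1))"
proof -
  have "tri x = k * tri t \<longleftrightarrow> 2 * tri x = 2 * (k * tri t)" by simp
  also have "\<dots> \<longleftrightarrow> x * (x + 1) = k * (2 * tri t)" by (simp add: tri2 mult.left_commute)
  also have "\<dots> \<longleftrightarrow> x * (x + 1) = k * (t * (t + 1))" by (simp add: tri2)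
  finally show ?thesis .
qed

lemma prime_power_split:
  fixes p a b :: nat
  assumes "prime p" "p ^ n dvd a * b" "coprime a b"
  shows "p ^ n dvd a \<or> p ^ n dvd b"
proof (cases "p dvd a")
  case True
  have "\<not> p dvd b"
  proof
    assume "p dvd b"
    with True assms(3) have "is_unit p" by (meson coprime_common_divisor)
    thus False using assms(1) by simp
  qed
  hence "coprime p b" using assms(1) by (simp add: prime_imp_coprime)
  hence "coprime (p ^ n) b" by simp
  hence "p ^ n dvd a" using assms(2) coprime_dvd_mult_left_iff by blast
  thus ?thesis by simp
next
  case False
  hence "coprime p a" using assms(1) by (simp add: prime_imp_coprime)
  hence "coprime (p ^ n) a" by simp
  hence "p ^ n dvd b" using assms(2) coprime_dvd_mult_right_iff by blast
  thus ?thesis by simp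
qed

lemma rem_cases:
  fixes k :: nat
  assumes k2: "k \<ge> 2" and pp: "\<exists>\<alpha> n. prime \<alpha> \<and> k = \<alpha> ^ n"
    and sol: "tri x = k * tri t"
  shows "x mod k = 0 \<or> x mod k = k - 1"
proof -
  obtain \<alpha> n where a: "prime \<alpha>" "k = \<alpha> ^ n" using pp by blast
  have "x * (x + 1) = k * (t * (t + 1))" using sol tri_eq_iff by blast
  hence "k dvd x * (x + 1)" by simp
  moreover have "coprime x (x + 1)" by simp
  ultimately have "k dvd x \<or> k dvd x + 1" using prime_power_split[OF a(1)] a(2) by blast
  thus ?thesis
  proof
    assume "k dvd x" thus ?thesis by simp
  next
    assume d: "k dvd x + 1"
    have "Suc x mod k = 0" using d by simp
    hence "Suc (x mod k) = k" by (metis mod_Suc nat.distinct(1))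
    thus ?thesis by arith
  qed
qed

lemma mk_sol:
  fixes x y :: int and k :: nat
  assumes "x > 0" "y > 0" "odd x" "odd y" "x^2 - int k * y^2 = 1 - int k"
  shows "\<exists>\<xi> t. tri \<xi> = k * tri t \<and> 2 * int \<xi> + 1 = x"
proof -
  obtain a where a: "x = 2 * a + 1" using assms(3) by (metis oddE)
  obtain b where b: "y = 2 * b + 1" using assms(4) by (metis oddE)
  have a0: "a \<ge> 0" using a assms(1) by linarith
  have b0: "b \<ge> 0" using b assms(2) by linarith
  define \<xi> where "\<xi> = nat a"
  define t where "t = nat b"
  have xa: "int \<xi> = a" using a0 by (simp add: \<xi>_def)
  have tb: "int t = b" using b0 by (simp add: t_def)
  have "4 * (a * (a + 1)) = 4 * (int k * (b * (b + 1)))"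
    using assms(5) unfolding a b by (simp add: algebra_simps power2_eq_square)
  hence "a * (a + 1) = int k * (b * (b + 1))" by simp
  hence "int (\<xi> * (\<xi> + 1)) = int (k * (t * (t + 1)))" by (simp only: of_nat_mult of_nat_add of_nat_1 xa tb)
  hence "\<xi> * (\<xi> + 1) = k * (t * (t + 1))" by (simp only: of_nat_eq_iff)
  hence "tri \<xi> = k * tri t" using tri_eq_iff by blast
  moreover have "2 * int \<xi> + 1 = x" using xa a by simp
  ultimately show ?thesis by blast
qed

theorem proposition2:
  fixes k :: nat
  assumes "k \<ge> 2"
    and "\<not> (\<exists>m. k = m ^ 2)"
    and "prime k \<or> (\<exists>\<alpha> n. prime \<alpha> \<and> odd n \<and> k = \<alpha> ^ n)"
  shows "R_set k = {0, k - 1} \<and> card (R_set k) = 2"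
proof -
  have pp: "\<exists>\<alpha> n. prime \<alpha> \<and> k = \<alpha> ^ n"
    using assms(3) by (metis power_one_right)
  have sub: "R_set k \<subseteq> {0, k - 1}"
  proof
    fix r assume "r \<in> R_set k"
    then obtain x t where "r = x mod k" "tri x = k * tri t" by (auto simp: R_set_def)
    thus "r \<in> {0, k - 1}" using rem_cases[OF assms(1) pp, of x t] by simp
  qed
  have in0: "0 \<in> R_set k"
  proof -
    have "(0::nat) = 0 mod k \<and> tri 0 = k * tri 0" by (simp add: tri_def)
    hence "\<exists>\<xi> t. (0::nat) = \<xi> mod k \<and> tri \<xi> = k * tri t" by blast
    thus ?thesis unfolding R_set_def by simp
  qed
  obtain U V :: int where UV: "V \<noteq> 0" "U^2 - int k * V^2 = 1" using pell_int[OF assms(2)] by blast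
  define a where "a = \<bar>U\<bar>"
  define b where "b = \<bar>V\<bar>"
  have b0: "b > 0" using UV(1) by (simp add: b_def)
  have ab: "a^2 - int k * b^2 = 1" using UV(2) by (simp add: a_def b_def)
  have a0: "a > 0"
  proof -
    have "a^2 \<noteq> 0" using ab b0 by (smt (verit) mult_nonneg_nonneg of_nat_0_le_iff zero_le_power2)
    thus ?thesis by (simp add: a_def)
  qed
  define A where "A = a^2 + int k * b^2"
  define B where "B = 2 * a * b"
  have AB: "A^2 - int k * B^2 = 1"
  proof -
    have "A^2 - int k * B^2 = (a^2 - int k * b^2)^2"
      unfolding A_def B_def by (simp add: algebra_simps power2_eq_square)
    thus ?thesis using ab by simp
  qed
  have B0: "B > 0" using a0 b0 by (simp add: B_def)
  have A0: "A > 0" using a0 b0 by (simp add: A_def add_pos_nonneg)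
  have Bev: "even B" by (simp add: B_def)
  have Aodd: "odd A"
  proof
    assume "even A"
    hence "even (A^2 - int k * B^2)" using Bev by simp
    thus False using AB by simp
  qed
  have kk: "int k \<ge> 2" using assms(1) by simp
  have B2: "B^2 \<ge> 1" using B0 by (simp add: one_le_power)
  have AgtB: "A > B"
  proof -
    have "A^2 > B^2" using AB kk B2 by (smt (verit) mult_le_cancel_right1 zero_le_power2)
    thus ?thesis using A0 B0 by (smt (verit) power_mono)
  qed
  have kBA: "int k * B > A"
  proof -
    have "int k * B^2 \<ge> 2 * B^2" using kk B2 by (intro mult_right_mono) auto
    hence h1: "int k * B^2 > 1" using B2 by linarith
    have "(int k * B)^2 = int k * (int k * B^2)" by (simp add: power2_eq_square algebra_simps)
    also have "\<dots> \<ge> 2 * (int k * B^2)" using kk h1 by (intro mult_right_mono) auto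
    finally have "(int k * B)^2 > A^2" using AB h1 by linarith
    moreover have "int k * B \<ge> 0" using B0 kk by simp
    ultimately show ?thesis by (rule power_less_imp_less_base)
  qed
  have s1: "\<exists>\<xi> t. tri \<xi> = k * tri t \<and> 2 * int \<xi> + 1 = int k * B + A"
  proof (rule mk_sol)
    have "int k * B \<ge> 0" using B0 kk by simp
    thus "int k * B + A > 0" using A0 by linarith
    show "A + B > 0" using A0 B0 by simp
    show "odd (int k * B + A)" using Bev Aodd by simp
    show "odd (A + B)" using Bev Aodd by simp
    have "(int k * B + A)^2 - int k * (A + B)^2 = (A^2 - int k * B^2) * (1 - int k)"
      by (simp add: algebra_simps power2_eq_square)
    thus "(int k * B + A)^2 - int k * (A + B)^2 = 1 - int k" using AB by simp
  qed
  have s2: "\<exists>\<xi> t. tri \<xi> = k * tri t \<and> 2 * int \<xi> + 1 = int k * B - A"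
  proof (rule mk_sol)
    show "int k * B - A > 0" using kBA by simp
    show "A - B > 0" using AgtB by simp
    show "odd (int k * B - A)" using Bev Aodd by simp
    show "odd (A - B)" using Bev Aodd by simp
    have "(int k * B - A)^2 - int k * (A - B)^2 = (A^2 - int k * B^2) * (1 - int k)"
      by (simp add: algebra_simps power2_eq_square)
    thus "(int k * B - A)^2 - int k * (A - B)^2 = 1 - int k" using AB by simp
  qed
  obtain x1 t1 where X1: "tri x1 = k * tri t1" "2 * int x1 + 1 = int k * B + A" using s1 by blast
  obtain x2 t2 where X2: "tri x2 = k * tri t2" "2 * int x2 + 1 = int k * B - A" using s2 by blast
  have inK: "k - 1 \<in> R_set k"
  proof (rule ccontr)
    assume nin: "k - 1 \<notin> R_set k"
    have "x1 mod k \<in> R_set k" using X1(1) by (auto simp: R_set_def)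
    hence m1: "x1 mod k = 0" using rem_cases[OF assms(1) pp X1(1)] nin by auto
    have "x2 mod k \<in> R_set k" using X2(1) by (auto simp: R_set_def)
    hence m2: "x2 mod k = 0" using rem_cases[OF assms(1) pp X2(1)] nin by auto
    have "int x1 + int x2 + 1 = int k * B" using X1(2) X2(2) by linarith
    hence "int (x1 + x2 + 1) = int k * B" by simp
    moreover have "int k dvd int k * B" by simp
    ultimately have "k dvd x1 + x2 + 1" by (metis int_dvd_int_iff)
    moreover have "k dvd x1 + x2" using m1 m2 by (simp add: dvd_add mod_eq_0_iff_dvd)
    ultimately have "k dvd 1" by (metis add.assoc dvd_add_right_iff)
    thus False using assms(1) by simp
  qed
  have eq: "R_set k = {0, k - 1}" using sub in0 inK by blast
  moreover have "card {0, k - 1} = 2" using assms(1) by simp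
  ultimately show ?thesis by simp
qed

end
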